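(* Let $q\geq 2$ and let $G$ be a thin headless spider of order $q$ or a thick headless spider of order $q$. Then $\eta(G)=\lceil (q+1)/2\rceil$.
   Context: All graphs are finite, simple and undirected. A thin headless spider of order $q$ has vertices $u_1,\dots,u_q,v_1,\dots,v_q$, where $\{u_1,\dots,u_q\}$ is a clique, $\{v_1,\dots,v_q\}$ is a stable set, and the edges between the two sets are exactly $(u_i,v_i)$ for $i\in[q]$. A thick headless spider of order $q$ has the same vertices, clique and stable set, but the edges between the two sets are exactly $(u_i,v_j)$ for $i,j\in[q]$, $i\neq j$. For a vertex $v$, $N(v)$ is its set of neighbours. For a positive integer $k$, $[k]=\{1,\dots,k\}$. For a labeling $f:V(G)\to[k]$ and $S\subseteq V(G)$, $f(S)=\sum_{u\in S}f(u)$. A labeling $f:V(G)\to[k]$ is an additive $k$-coloring if $f(N(u))\neq f(N(v))$ for every edge $(u,v)$ of $G$. The additive chromatic number $\eta(G)$ is the least $k$ for which $G$ has an additive $k$-coloring. *)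

theory Defs
  imports Complex_Main
begin

definition simple_graph :: "'a set \<Rightarrow> ('a \<Rightarrow> 'a \<Rightarrow> bool) \<Rightarrow> bool" where
  "simple_graph V E \<longleftrightarrow> finite V \<and> (\<forall>x y. E x y \<longrightarrow> x \<in> V \<and> y \<in> V)
     \<and> (\<forall>x y. E x y \<longrightarrow> E y x) \<and> (\<forall>x. \<not> E x x)"

definition nbhd :: "'a set \<Rightarrow> ('a \<Rightarrow> 'a \<Rightarrow> bool) \<Rightarrow> 'a \<Rightarrow> 'a set" where
  "nbhd V E x = {y \<in> V. E x y}"

definition additive_coloring :: "'a set \<Rightarrow> ('a \<Rightarrow> 'a \<Rightarrow> bool) \<Rightarrow> nat \<Rightarrow> ('a \<Rightarrow> nat) \<Rightarrow> bool" where
  "additive_coloring V E k f \<longleftrightarrow> (\<forall>x\<in>V. f x \<in> {1..k})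
     \<and> (\<forall>x\<in>V. \<forall>y\<in>V. E x y \<longrightarrow> sum f (nbhd V E x) \<noteq> sum f (nbhd V E y))"

definition additive_chromatic_number :: "'a set \<Rightarrow> ('a \<Rightarrow> 'a \<Rightarrow> bool) \<Rightarrow> nat" where
  "additive_chromatic_number V E = (LEAST k. k > 0 \<and> (\<exists>f. additive_coloring V E k f))"

definition thin_headless_spider :: "'a set \<Rightarrow> ('a \<Rightarrow> 'a \<Rightarrow> bool) \<Rightarrow> nat \<Rightarrow> bool" where
  "thin_headless_spider V E q \<longleftrightarrow> (\<exists>u v :: nat \<Rightarrow> 'a.
     inj_on u {1..q} \<and> inj_on v {1..q} \<and> u ` {1..q} \<inter> v ` {1..q} = {}
     \<and> V = u ` {1..q} \<union> v ` {1..q}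
     \<and> (\<forall>i\<in>{1..q}. \<forall>j\<in>{1..q}. E (u i) (u j) \<longleftrightarrow> i \<noteq> j)
     \<and> (\<forall>i\<in>{1..q}. \<forall>j\<in>{1..q}. \<not> E (v i) (v j))
     \<and> (\<forall>i\<in>{1..q}. \<forall>j\<in>{1..q}. (E (u i) (v j) \<longleftrightarrow> i = j) \<and> (E (v j) (u i) \<longleftrightarrow> i = j)))"

definition thick_headless_spider :: "'a set \<Rightarrow> ('a \<Rightarrow> 'a \<Rightarrow> bool) \<Rightarrow> nat \<Rightarrow> bool" where
  "thick_headless_spider V E q \<longleftrightarrow> (\<exists>u v :: nat \<Rightarrow> 'a.
     inj_on u {1..q} \<and> inj_on v {1..q} \<and> u ` {1..q} \<inter> v ` {1..q} = {}
     \<and> V = u ` {1..q} \<union> v ` {1..q}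
     \<and> (\<forall>i\<in>{1..q}. \<forall>j\<in>{1..q}. E (u i) (u j) \<longleftrightarrow> i \<noteq> j)
     \<and> (\<forall>i\<in>{1..q}. \<forall>j\<in>{1..q}. \<not> E (v i) (v j))
     \<and> (\<forall>i\<in>{1..q}. \<forall>j\<in>{1..q}. (E (u i) (v j) \<longleftrightarrow> i \<noteq> j) \<and> (E (v j) (u i) \<longleftrightarrow> i \<noteq> j)))"

end

theory Submission
  imports Defs
begin

locale sp =
  fixes V :: "'a set" and E :: "'a \<Rightarrow> 'a \<Rightarrow> bool" and q :: nat and u v :: "nat \<Rightarrow> 'a"
  assumes q2: "q \<ge> 2"
    and injU: "inj_on u {1..q}" and injV: "inj_on v {1..q}"
    and disj: "u ` {1..q} \<inter> v ` {1..q} = {}"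
    and Vdef: "V = u ` {1..q} \<union> v ` {1..q}"
    and uu: "\<forall>i\<in>{1..q}. \<forall>j\<in>{1..q}. E (u i) (u j) \<longleftrightarrow> i \<noteq> j"
    and vv: "\<forall>i\<in>{1..q}. \<forall>j\<in>{1..q}. \<not> E (v i) (v j)"
begin

lemma sum_u: assumes "i \<in> {1..q}"
  shows "sum f (u ` ({1..q} - {i})) + f (u i) = sum (f \<circ> u) {1..q}"
proof -
  have "sum f (u ` ({1..q} - {i})) = sum (f \<circ> u) ({1..q}-{i})"
    by (rule sum.reindex) (meson Diff_subset inj_on_subset injU)
  then show ?thesis using sum.remove[of "{1..q}" i "f\<circ>u"] assms by (simp add: add.commute)
qed

lemma sum_v: assumes "i \<in> {1..q}"
  shows "sum f (v ` ({1..q} - {i})) + f (v i) = sum (f \<circ> v) {1..q}"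
proof -
  have "sum f (v ` ({1..q} - {i})) = sum (f \<circ> v) ({1..q}-{i})"
    by (rule sum.reindex) (meson Diff_subset inj_on_subset injV)
  then show ?thesis using sum.remove[of "{1..q}" i "f\<circ>v"] assms by (simp add: add.commute)
qed

lemma vnotu: "i \<in> {1..q} \<Longrightarrow> v i \<notin> u ` A \<or> \<not> A \<subseteq> {1..q}"
  using disj by blast

end

locale thin = sp +
  assumes uv: "\<forall>i\<in>{1..q}. \<forall>j\<in>{1..q}. (E (u i) (v j) \<longleftrightarrow> i = j) \<and> (E (v j) (u i) \<longleftrightarrow> i = j)"
begin

lemma nb_u: assumes "i \<in> {1..q}" shows "nbhd V E (u i) = u ` ({1..q} - {i}) \<union> {v i}"
  using assms uu uv injU unfolding nbhd_def Vdef by (auto simp: inj_on_eq_iff)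

lemma nb_v: assumes "i \<in> {1..q}" shows "nbhd V E (v i) = {u i}"
  using assms vv uv unfolding nbhd_def Vdef by auto

lemma sum_nb_u: assumes "i \<in> {1..q}"
  shows "sum f (nbhd V E (u i)) = sum f (u ` ({1..q} - {i})) + f (v i)"
proof -
  have "v i \<notin> u ` ({1..q} - {i})" using disj assms by blast
  then show ?thesis unfolding nb_u[OF assms] by (simp add: sum.union_disjoint add.commute)
qed


lemma lower: assumes "additive_coloring V E m f" shows "q + 1 \<le> 2*m"
proof -
  let ?U = "{1..q}"
  have lab: "\<And>x. x \<in> V \<Longrightarrow> f x \<in> {1..m}" using assms unfolding additive_coloring_def by blast
  have ne: "\<And>x y. x\<in>V \<Longrightarrow> y\<in>V \<Longrightarrow> E x y \<Longrightarrow> sum f (nbhd V E x) \<noteq> sum f (nbhd V E y)"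
    using assms unfolding additive_coloring_def by blast
  have uV: "\<And>i. i\<in>?U \<Longrightarrow> u i \<in> V" and vV: "\<And>i. i\<in>?U \<Longrightarrow> v i \<in> V" by (auto simp: Vdef)
  have key: "f (v i) + f (u j) \<noteq> f (v j) + f (u i)" if i: "i\<in>?U" and j: "j\<in>?U" and ij: "i\<noteq>j" for i j
  proof
    assume eq: "f (v i) + f (u j) = f (v j) + f (u i)"
    have "E (u i) (u j)" using uu i j ij by blast
    hence "sum f (nbhd V E (u i)) \<noteq> sum f (nbhd V E (u j))" using ne uV i j by blast
    moreover have "sum f (u ` (?U-{i})) + f (u i) = sum (f\<circ>u) ?U" by (rule sum_u[OF i])
    moreover have "sum f (u ` (?U-{j})) + f (u j) = sum (f\<circ>u) ?U" by (rule sum_u[OF j])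
    ultimately show False using eq unfolding sum_nb_u[OF i] sum_nb_u[OF j] by linarith
  qed
  define g where "g i = f (v i) + m - f (u i)" for i
  have bnd: "1 \<le> f (u i) \<and> f (u i) \<le> m \<and> 1 \<le> f (v i) \<and> f (v i) \<le> m" if "i \<in> ?U" for i
    using lab uV vV that by auto
  have inj: "inj_on g ?U"
  proof (rule inj_onI)
    fix i j assume i: "i \<in> ?U" and j: "j \<in> ?U" and gij: "g i = g j"
    have "f (v i) + f (u j) = f (v j) + f (u i)" using gij bnd[OF i] bnd[OF j] unfolding g_def by linarith
    then show "i = j" using key i j by blast
  qed
  have sub: "g ` ?U \<subseteq> {1..2*m-1}"
  proof
    fix y assume "y \<in> g ` ?U"
    then obtain i where i: "i \<in> ?U" and y: "y = g i" by blast
    show "y \<in> {1..2*m-1}" using bnd[OF i] unfolding y g_def by auto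
  qed
  have "card ?U \<le> card {1..2*m-1}" by (rule card_inj_on_le[OF inj sub]) simp
  thus ?thesis using q2 by simp
qed

lemma upper: "\<exists>f. additive_coloring V E ((q+2) div 2) f"
proof -
  let ?U = "{1..q}"
  define k where "k = (q+2) div 2"
  have k2: "k \<ge> 2" "q+1 \<le> 2*k" "2*k \<le> q+2" "k \<le> q" using q2 unfolding k_def by auto
  define F1 where "F1 i = (if i \<le> k then k else 2*k - i)" for i
  define F2 where "F2 i = (if i \<le> k then i else k)" for i
  define f where "f x = (if x \<in> u`?U then F1 (inv_into ?U u x) else F2 (inv_into ?U v x))" for x
  have fu: "f (u i) = F1 i" if i: "i\<in>?U" for i
  proof -
    have "inv_into ?U u (u i) = i" using injU i by (rule inv_into_f_f)
    then show ?thesis using i by (simp add: f_def)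
  qed
  have fv: "f (v i) = F2 i" if i: "i\<in>?U" for i
  proof -
    have "v i \<notin> u ` ?U" using disj i by blast
    moreover have "inv_into ?U v (v i) = i" using injV i by (rule inv_into_f_f)
    ultimately show ?thesis by (simp add: f_def)
  qed
  have F1r: "1 \<le> F1 i \<and> F1 i \<le> k" if "i\<in>?U" for i using k2 that by (auto simp: F1_def)
  have F2r: "1 \<le> F2 i \<and> F2 i \<le> k" if "i\<in>?U" for i using k2 that by (auto simp: F2_def)
  have Sbig: "sum (f\<circ>u) ?U \<ge> 2*k"
  proof -
    have "sum (f\<circ>u) {1..k} \<le> sum (f\<circ>u) ?U" by (rule sum_mono2) (use k2 in auto)
    moreover have "sum (f\<circ>u) {1..k} = sum (\<lambda>_. k) {1..k}"
      by (rule sum.cong) (use k2 fu in \<open>auto simp: F1_def\<close>)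
    moreover have "sum (\<lambda>_. k) {1..k} = k*k" by simp
    moreover have "2*k \<le> k*k" using mult_le_mono1[OF k2(1), of k] by simp
    ultimately show ?thesis by linarith
  qed
  have "additive_coloring V E k f"
    unfolding additive_coloring_def
  proof (intro conjI ballI impI)
    fix x assume "x\<in>V" then show "f x \<in> {1..k}" using fu fv F1r F2r unfolding Vdef by auto
  next
    fix x y assume x: "x\<in>V" and y: "y\<in>V" and e: "E x y"
    from x obtain i where i: "i\<in>?U" "x = u i \<or> x = v i" unfolding Vdef by auto
    from y obtain j where j: "j\<in>?U" "y = u j \<or> y = v j" unfolding Vdef by auto
    have Ai: "sum f (u ` (?U-{i})) + F1 i = sum (f\<circ>u) ?U" using sum_u[OF i(1), of f] fu i by simp
    have Aj: "sum f (u ` (?U-{j})) + F1 j = sum (f\<circ>u) ?U" using sum_u[OF j(1), of f] fu j by simp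
    show "sum f (nbhd V E x) \<noteq> sum f (nbhd V E y)"
    proof (cases "x = u i")
      case xu: True
      show ?thesis
      proof (cases "y = u j")
        case True
        then have "i \<noteq> j" using e xu uu i j by auto
        have "F2 i + F1 j \<noteq> F2 j + F1 i" using \<open>i\<noteq>j\<close> i j k2 unfolding F1_def F2_def by auto
        then show ?thesis using Ai Aj
          unfolding xu True sum_nb_u[OF i(1)] sum_nb_u[OF j(1)] fv[OF i(1)] fv[OF j(1)] by linarith
      next
        case False then have yv: "y = v j" using j by auto
        then have "i = j" using e xu uv i j by auto
        show ?thesis using \<open>i=j\<close> Ai Sbig F1r[OF i(1)] F2r[OF i(1)]
          unfolding xu yv sum_nb_u[OF i(1)] nb_v[OF j(1)] fv[OF i(1)] fu[OF i(1)] by (simp add: fu[OF j(1)])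
      qed
    next
      case False then have xv: "x = v i" using i by auto
      show ?thesis
      proof (cases "y = u j")
        case yu: True
        then have "i = j" using e xv uv i j by auto
        show ?thesis using \<open>i=j\<close> Aj Sbig F1r[OF j(1)] F2r[OF j(1)]
          unfolding xv yu sum_nb_u[OF j(1)] nb_v[OF i(1)] fv[OF j(1)] fu[OF j(1)] by (simp add: fu[OF i(1)] fu[OF j(1)])
      next
        case False then have yv: "y = v j" using j by auto
        then show ?thesis using e xv vv i j by auto
      qed
    qed
  qed
  thus ?thesis unfolding k_def by blast
qed

lemma chrom: "additive_chromatic_number V E = (q+2) div 2"
  unfolding additive_chromatic_number_def
proof (rule Least_equality)
  show "0 < (q + 2) div 2 \<and> (\<exists>f. additive_coloring V E ((q + 2) div 2) f)" using upper q2 by auto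
next
  fix m assume "0 < m \<and> (\<exists>f. additive_coloring V E m f)"
  then obtain f where "additive_coloring V E m f" by blast
  from lower[OF this] show "(q + 2) div 2 \<le> m" by linarith
qed

end

locale thick = sp +
  assumes uv: "\<forall>i\<in>{1..q}. \<forall>j\<in>{1..q}. (E (u i) (v j) \<longleftrightarrow> i \<noteq> j) \<and> (E (v j) (u i) \<longleftrightarrow> i \<noteq> j)"
begin

lemma nb_u: assumes "i \<in> {1..q}" shows "nbhd V E (u i) = u ` ({1..q} - {i}) \<union> v ` ({1..q} - {i})"
  using assms uu uv injU injV unfolding nbhd_def Vdef by (auto simp: inj_on_eq_iff)

lemma nb_v: assumes "i \<in> {1..q}" shows "nbhd V E (v i) = u ` ({1..q} - {i})"
  using assms vv uv injU unfolding nbhd_def Vdef by (auto simp: inj_on_eq_iff)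

lemma sum_nb_u: assumes "i \<in> {1..q}"
  shows "sum f (nbhd V E (u i)) = sum f (u ` ({1..q} - {i})) + sum f (v ` ({1..q} - {i}))"
proof -
  have "u ` ({1..q} - {i}) \<inter> v ` ({1..q} - {i}) = {}" using disj by blast
  then show ?thesis unfolding nb_u[OF assms] by (simp add: sum.union_disjoint)
qed


lemma lower: assumes "additive_coloring V E m f" shows "q + 1 \<le> 2*m"
proof -
  let ?U = "{1..q}"
  have lab: "\<And>x. x \<in> V \<Longrightarrow> f x \<in> {1..m}" using assms unfolding additive_coloring_def by blast
  have ne: "\<And>x y. x\<in>V \<Longrightarrow> y\<in>V \<Longrightarrow> E x y \<Longrightarrow> sum f (nbhd V E x) \<noteq> sum f (nbhd V E y)"
    using assms unfolding additive_coloring_def by blast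
  have uV: "\<And>i. i\<in>?U \<Longrightarrow> u i \<in> V" and vV: "\<And>i. i\<in>?U \<Longrightarrow> v i \<in> V" by (auto simp: Vdef)
  have key: "f (u i) + f (v i) \<noteq> f (u j) + f (v j)" if i: "i\<in>?U" and j: "j\<in>?U" and ij: "i\<noteq>j" for i j
  proof
    assume eq: "f (u i) + f (v i) = f (u j) + f (v j)"
    have "E (u i) (u j)" using uu i j ij by blast
    hence "sum f (nbhd V E (u i)) \<noteq> sum f (nbhd V E (u j))" using ne uV i j by blast
    moreover have "sum f (u ` (?U-{i})) + f (u i) = sum (f\<circ>u) ?U" by (rule sum_u[OF i])
    moreover have "sum f (u ` (?U-{j})) + f (u j) = sum (f\<circ>u) ?U" by (rule sum_u[OF j])
    moreover have "sum f (v ` (?U-{i})) + f (v i) = sum (f\<circ>v) ?U" by (rule sum_v[OF i])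
    moreover have "sum f (v ` (?U-{j})) + f (v j) = sum (f\<circ>v) ?U" by (rule sum_v[OF j])
    ultimately show False using eq unfolding sum_nb_u[OF i] sum_nb_u[OF j] by linarith
  qed
  define g where "g i = f (u i) + f (v i) - 1" for i
  have bnd: "1 \<le> f (u i) \<and> f (u i) \<le> m \<and> 1 \<le> f (v i) \<and> f (v i) \<le> m" if "i \<in> ?U" for i
    using lab uV vV that by auto
  have inj: "inj_on g ?U"
  proof (rule inj_onI)
    fix i j assume i: "i \<in> ?U" and j: "j \<in> ?U" and gij: "g i = g j"
    have "f (u i) + f (v i) = f (u j) + f (v j)" using gij bnd[OF i] bnd[OF j] unfolding g_def by linarith
    then show "i = j" using key i j by blast
  qed
  have sub: "g ` ?U \<subseteq> {1..2*m-1}"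
  proof
    fix y assume "y \<in> g ` ?U"
    then obtain i where i: "i \<in> ?U" and y: "y = g i" by blast
    show "y \<in> {1..2*m-1}" using bnd[OF i] unfolding y g_def by auto
  qed
  have "card ?U \<le> card {1..2*m-1}" by (rule card_inj_on_le[OF inj sub]) simp
  thus ?thesis using q2 by simp
qed

lemma upper: "\<exists>f. additive_coloring V E ((q+2) div 2) f"
proof -
  let ?U = "{1..q}"
  define k where "k = (q+2) div 2"
  have k2: "k \<ge> 2" "q+1 \<le> 2*k" "2*k \<le> q+2" "k \<le> q" using q2 unfolding k_def by auto
  define F1 where "F1 i = (if q - k < i then i + k - q else 1)" for i
  define F2 where "F2 i = (if q - k < i then k else i + 2*k - q - 1)" for i
  define f where "f x = (if x \<in> u`?U then F1 (inv_into ?U u x) else F2 (inv_into ?U v x))" for x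
  have fu: "f (u i) = F1 i" if i: "i\<in>?U" for i
  proof -
    have "inv_into ?U u (u i) = i" using injU i by (rule inv_into_f_f)
    then show ?thesis using i by (simp add: f_def)
  qed
  have fv: "f (v i) = F2 i" if i: "i\<in>?U" for i
  proof -
    have "v i \<notin> u ` ?U" using disj i by blast
    moreover have "inv_into ?U v (v i) = i" using injV i by (rule inv_into_f_f)
    ultimately show ?thesis by (simp add: f_def)
  qed
  have F1r: "1 \<le> F1 i \<and> F1 i \<le> k" if "i\<in>?U" for i using k2 that by (auto simp: F1_def)
  have F2r: "1 \<le> F2 i \<and> F2 i \<le> k" if "i\<in>?U" for i using k2 that by (auto simp: F2_def)
  have Fs: "F1 i + F2 i = i + 2*k - q" if "i\<in>?U" for i using k2 that by (auto simp: F1_def F2_def)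
  have Tbig: "sum (f\<circ>v) ?U \<ge> 2*k"
  proof -
    have "sum (f\<circ>v) {q-k+1..q} \<le> sum (f\<circ>v) ?U" by (rule sum_mono2) (use k2 in auto)
    moreover have "sum (f\<circ>v) {q-k+1..q} = sum (\<lambda>_. k) {q-k+1..q}"
      by (rule sum.cong) (use k2 fv in \<open>auto simp: F2_def\<close>)
    moreover have "sum (\<lambda>_. k) {q-k+1..q} = k*k" using k2 by simp
    moreover have "2*k \<le> k*k" using mult_le_mono1[OF k2(1), of k] by simp
    ultimately show ?thesis by linarith
  qed
  have "additive_coloring V E k f"
    unfolding additive_coloring_def
  proof (intro conjI ballI impI)
    fix x assume "x\<in>V" then show "f x \<in> {1..k}" using fu fv F1r F2r unfolding Vdef by auto
  next
    fix x y assume x: "x\<in>V" and y: "y\<in>V" and e: "E x y"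
    from x obtain i where i: "i\<in>?U" "x = u i \<or> x = v i" unfolding Vdef by auto
    from y obtain j where j: "j\<in>?U" "y = u j \<or> y = v j" unfolding Vdef by auto
    have Ai: "sum f (u ` (?U-{i})) + F1 i = sum (f\<circ>u) ?U" using sum_u[OF i(1), of f] fu i by simp
    have Aj: "sum f (u ` (?U-{j})) + F1 j = sum (f\<circ>u) ?U" using sum_u[OF j(1), of f] fu j by simp
    have Bi: "sum f (v ` (?U-{i})) + F2 i = sum (f\<circ>v) ?U" using sum_v[OF i(1), of f] fv i by simp
    have Bj: "sum f (v ` (?U-{j})) + F2 j = sum (f\<circ>v) ?U" using sum_v[OF j(1), of f] fv j by simp
    have Fsi: "F1 i + F2 i \<le> 2*k" and Fsj: "F1 j + F2 j \<le> 2*k" using F1r F2r i j by force+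
    show "sum f (nbhd V E x) \<noteq> sum f (nbhd V E y)"
    proof (cases "x = u i")
      case xu: True
      show ?thesis
      proof (cases "y = u j")
        case True
        then have "i \<noteq> j" using e xu uu i j by auto
        have "F1 i + F2 i \<noteq> F1 j + F2 j" using \<open>i\<noteq>j\<close> i j k2 Fs by auto
        then show ?thesis using Ai Aj Bi Bj
          unfolding xu True sum_nb_u[OF i(1)] sum_nb_u[OF j(1)] by linarith
      next
        case False then have yv: "y = v j" using j by auto
        then have "i \<noteq> j" using e xu uv i j by auto
        show ?thesis using Ai Bi Aj Tbig F1r[OF j(1)] Fsi
          unfolding xu yv sum_nb_u[OF i(1)] nb_v[OF j(1)] by linarith
      qed
    next
      case False then have xv: "x = v i" using i by auto
      show ?thesis
      proof (cases "y = u j")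
        case yu: True
        then have "i \<noteq> j" using e xv uv i j by auto
        show ?thesis using Aj Bj Ai Tbig F1r[OF i(1)] Fsj
          unfolding xv yu sum_nb_u[OF j(1)] nb_v[OF i(1)] by linarith
      next
        case False then have yv: "y = v j" using j by auto
        then show ?thesis using e xv vv i j by auto
      qed
    qed
  qed
  thus ?thesis unfolding k_def by blast
qed

lemma chrom: "additive_chromatic_number V E = (q+2) div 2"
  unfolding additive_chromatic_number_def
proof (rule Least_equality)
  show "0 < (q + 2) div 2 \<and> (\<exists>f. additive_coloring V E ((q + 2) div 2) f)" using upper q2 by auto
next
  fix m assume "0 < m \<and> (\<exists>f. additive_coloring V E m f)"
  then obtain f where "additive_coloring V E m f" by blast
  from lower[OF this] show "(q + 2) div 2 \<le> m" by linarith
qed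

end

theorem mainTheorem12:
  fixes V :: "'a set" and E :: "'a \<Rightarrow> 'a \<Rightarrow> bool" and q :: nat
  assumes "q \<ge> 2"
    and "simple_graph V E"
    and "thin_headless_spider V E q \<or> thick_headless_spider V E q"
  shows "int (additive_chromatic_number V E) = \<lceil>(real q + 1) / 2\<rceil>"
proof -
  have ch: "additive_chromatic_number V E = (q+2) div 2"
    using assms(3)
  proof
    assume "thin_headless_spider V E q"
    then obtain u v where "thin V E q u v"
      unfolding thin_headless_spider_def thin_def thin_axioms_def sp_def using assms(1) by blast
    then show ?thesis by (rule thin.chrom)
  next
    assume "thick_headless_spider V E q"
    then obtain u v where "thick V E q u v"
      unfolding thick_headless_spider_def thick_def thick_axioms_def sp_def using assms(1) by blast
    then show ?thesis by (rule thick.chrom)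
  qed
  define K where "K = (q+2) div 2"
  have h1: "q + 1 \<le> 2*K" "2*K \<le> q+2" unfolding K_def by auto
  have r1: "real q + 1 \<le> 2 * real K"
  proof -
    have "real (q+1) \<le> real (2*K)" using h1(1) by (simp only: of_nat_le_iff)
    then show ?thesis by simp
  qed
  have r2: "2 * real K \<le> real q + 2"
  proof -
    have "real (2*K) \<le> real (q+2)" using h1(2) by (simp only: of_nat_le_iff)
    then show ?thesis by simp
  qed
  have "\<lceil>(real q + 1) / 2\<rceil> = int K"
    by (rule ceiling_unique) (use r1 r2 in auto)
  then show ?thesis using ch K_def by simp
qed

end
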